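(* Let $d\ge2$, $q\ge2$, $n\ge1$, let $p\in\mathbb{Z}/q\mathbb{Z}$ with $\gcd(p,q)=1$ and let $p^*$ be the inverse of $p$ in $\mathbb{Z}/q\mathbb{Z}$. For $1\le i\le n$ let $\mathcal{O}_i$ be the $\sigma_d$-orbit of a point $t_i\in\mathbb{T}$ with $|\mathcal{O}_i|=q$, where the orbits $\mathcal{O}_1,\dots,\mathcal{O}_n$ are pairwise distinct and $t_1<t_2<\dots<t_n$. Write $t_i=(a^{(i)}_0,a^{(i)}_1,\dots,a^{(i)}_{q-1})$ in $q$-tuple notation. Let $A=\bigcup_{i=1}^n\mathcal{O}_i$, listed as $A=\{u_0<u_1<\dots<u_{nq-1}\}$ with indices in $\mathbb{Z}/nq\mathbb{Z}$. Then the following are equivalent: (a) each $t_i$ is the least element of $\mathcal{O}_i$, and $A$ is $\sigma_d$-rotational with $\sigma_d(u_j)=u_{j+np}$ for all $j$ (i.e. $A$ has rotation number $np/nq=p/q$); (b) the sequence of length $nq$ $$a^{(1)}_0,a^{(2)}_0,\dots,a^{(n)}_0,\ a^{(1)}_{p^*},a^{(2)}_{p^*},\dots,a^{(n)}_{p^*},\ a^{(1)}_{2p^*},\dots,a^{(n)}_{2p^*},\ \dots,\ a^{(1)}_{(q-1)p^*},\dots,a^{(n)}_{(q-1)p^*}$$ (i.e. the terms $a^{(i)}_{kp^*}$ ordered first by $k=0,1,\dots,q-1$ and then by $i=1,\dots,n$) is nondecreasing, and moreover $a^{(n)}_{-(p+1)p^*}<a^{(1)}_{-pp^*}$.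
   Context: $\mathbb{T}=\mathbb{R}/\mathbb{Z}$, totally ordered by choosing representatives in $[0,1)$; $\sigma_d(t)=dt$. A finite set $A=\{u_0<\dots<u_{N-1}\}\subset\mathbb{T}$ (indices in $\mathbb{Z}/N\mathbb{Z}$) is $\sigma_d$-rotational if for some fixed $0\ne P\in\mathbb{Z}/N\mathbb{Z}$, $\sigma_d(u_j)=u_{j+P}$ for all $j$; its rotation number is $P/N$. $q$-tuple notation: for digits $a_i\in\{0,\dots,d-1\}$, $(a_0,\dots,a_{q-1})$ denotes the point of $\mathbb{T}$ with purely periodic base-$d$ expansion $0.\overline{a_0a_1\dots a_{q-1}}$, with digit indices read in $\mathbb{Z}/q\mathbb{Z}$ (so every point of period $q$ under $\sigma_d$ has such a representation). Index expressions such as $kp^*$, $-(p+1)p^*$, $-pp^*$ are computed in $\mathbb{Z}/q\mathbb{Z}$. *)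

theory Defs
  imports Complex_Main "HOL-Number_Theory.Cong"
begin

text \<open>The circle T = R/Z is represented by representatives in [0,1), ordered as reals.\<close>

definition sigma :: "nat \<Rightarrow> real \<Rightarrow> real" where
  "sigma d t = frac (real d * t)"

definition orb :: "nat \<Rightarrow> real \<Rightarrow> real set" where
  "orb d t = range (\<lambda>k. (sigma d ^^ k) t)"

text \<open>q-tuple notation: the point with purely periodic base-d expansion 0.(a_0 ... a_{q-1}) repeated.\<close>
definition tuple_pt :: "nat \<Rightarrow> nat \<Rightarrow> (nat \<Rightarrow> nat) \<Rightarrow> real" where
  "tuple_pt d q a = (\<Sum>k<q. real (a k) * real d ^ (q - 1 - k)) / (real d ^ q - 1)"

definition rot_shift :: "nat \<Rightarrow> real set \<Rightarrow> int \<Rightarrow> bool" where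
  "rot_shift d A P \<longleftrightarrow> finite A \<and>
     (let us = sorted_list_of_set A; N = length us in
       \<forall>j<N. sigma d (us ! j) = us ! nat ((int j + P) mod int N))"

end

theory Submission
  imports Defs
begin

lemma incr_id:
  fixes f :: "nat \<Rightarrow> nat" and n :: nat
  assumes inc: "\<And>i j. i \<in> {1..n} \<Longrightarrow> j \<in> {1..n} \<Longrightarrow> i < j \<Longrightarrow> f i < f j"
    and bd: "\<And>i. i \<in> {1..n} \<Longrightarrow> f i < n"
    and i: "i \<in> {1..n}"
  shows "f i = i - 1"
proof -
  have lo: "1 \<le> i \<Longrightarrow> i \<le> n \<Longrightarrow> i - 1 \<le> f i" for i
  proof (induction i)
    case 0 then show ?case by simp
  next
    case (Suc i)
    show ?case
    proof (cases "i = 0")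
      case True then show ?thesis by simp
    next
      case False
      then have "i - 1 \<le> f i" using Suc by simp
      moreover have "f i < f (Suc i)" using inc[of i "Suc i"] Suc.prems False by simp
      ultimately show ?thesis by simp
    qed
  qed
  have up: "k < n \<Longrightarrow> f (n - k) + k \<le> n - 1" for k
  proof (induction k)
    case 0 then show ?case using bd[of n] by simp
  next
    case (Suc k)
    then have "f (n - k) + k \<le> n - 1" by simp
    moreover have "f (n - Suc k) < f (n - k)" using inc[of "n - Suc k" "n - k"] Suc.prems by simp
    ultimately show ?case by simp
  qed
  have "f (n - (n - i)) + (n - i) \<le> n - 1" using up[of "n - i"] i by simp
  then have "f i \<le> i - 1" using i by simp arith
  then show ?thesis using lo i by (simp add: le_antisym)
qed

locale dq =
  fixes d q :: nat
  assumes d2: "d \<ge> 2" and q2: "q \<ge> 2"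
begin

definition D :: nat where "D = d ^ q - 1"
definition vl :: "(nat \<Rightarrow> nat) \<Rightarrow> nat" where "vl w = (\<Sum>k<q. w k * d ^ (q - 1 - k))"
definition sh :: "(nat \<Rightarrow> nat) \<Rightarrow> nat \<Rightarrow> nat \<Rightarrow> nat" where "sh w s = (\<lambda>k. w ((s + k) mod q))"
definition fd :: "nat \<Rightarrow> nat" where "fd X = d * X div D"

lemma dq_ge: "d ^ q \<ge> 4"
proof -
  have "d ^ q \<ge> 2 ^ q" using d2 by (simp add: power_mono)
  moreover have "(2::nat) ^ q \<ge> 2 ^ 2" using q2 by (intro power_increasing) auto
  ultimately show ?thesis by simp
qed

lemma D_ge: "D \<ge> 3" using dq_ge by (simp add: D_def)
lemma D_plus: "D + 1 = d ^ q" using dq_ge by (simp add: D_def)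

lemma geo: "(\<Sum>k<r. (d - 1) * d ^ (r - 1 - k)) + 1 = d ^ r"
proof (induction r)
  case 0 then show ?case by simp
next
  case (Suc r)
  have "(\<Sum>k<Suc r. (d - 1) * d ^ (Suc r - 1 - k)) = (\<Sum>k<r. d * ((d - 1) * d ^ (r - 1 - k))) + (d - 1)"
  proof -
    have "(\<Sum>k<r. (d - 1) * d ^ (Suc r - 1 - k)) = (\<Sum>k<r. d * ((d - 1) * d ^ (r - 1 - k)))"
    proof (rule sum.cong)
      fix k assume "k \<in> {..<r}"
      then have "Suc r - 1 - k = Suc (r - 1 - k)" by auto
      then show "(d - 1) * d ^ (Suc r - 1 - k) = d * ((d - 1) * d ^ (r - 1 - k))" by simp
    qed simp
    then show ?thesis by simp
  qed
  also have "\<dots> = d * (\<Sum>k<r. (d - 1) * d ^ (r - 1 - k)) + (d - 1)" by (simp add: sum_distrib_left)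
  finally have eq: "(\<Sum>k<Suc r. (d - 1) * d ^ (Suc r - 1 - k)) = d * (\<Sum>k<r. (d - 1) * d ^ (r - 1 - k)) + (d - 1)" .
  define S where "S = (\<Sum>k<r. (d - 1) * d ^ (r - 1 - k))"
  have "S + 1 = d ^ r" using Suc S_def by simp
  then have "d ^ Suc r = d * (S + 1)" by simp
  then have "d * S + (d - 1) + 1 = d ^ Suc r" using d2 by (simp add: algebra_simps)
  then show ?case using eq S_def by simp
qed

lemma vl_const: "vl (\<lambda>_. d - 1) = D"
  using geo[of q] by (simp add: vl_def D_def)

lemma vl_cong: "(\<And>k. k < q \<Longrightarrow> w k = w' k) \<Longrightarrow> vl w = vl w'"
  unfolding vl_def by (rule sum.cong) auto

lemma vl_le: assumes "\<And>k. k < q \<Longrightarrow> w k < d" shows "vl w \<le> D"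
proof -
  have "vl w \<le> vl (\<lambda>_. d - 1)" unfolding vl_def
  proof (rule sum_mono)
    fix k assume "k \<in> {..<q}"
    then have "w k < d" using assms by simp
    then show "w k * d ^ (q - 1 - k) \<le> (d - 1) * d ^ (q - 1 - k)" by (intro mult_le_mono1) linarith
  qed
  then show ?thesis using vl_const by simp
qed

lemma vl_D: assumes "\<And>k. k < q \<Longrightarrow> w k < d" and "vl w = D" and "k < q" shows "w k = d - 1"
proof (rule ccontr)
  assume "w k \<noteq> d - 1"
  then have lt: "w k < d - 1" using assms(1)[OF assms(3)] by simp
  have "vl w < vl (\<lambda>_. d - 1)" unfolding vl_def
  proof (rule sum_strict_mono_ex1)
    show "\<forall>x\<in>{..<q}. w x * d ^ (q - 1 - x) \<le> (d - 1) * d ^ (q - 1 - x)"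
    proof
      fix k assume "k \<in> {..<q}"
      then have "w k < d" using assms by simp
      then show "w k * d ^ (q - 1 - k) \<le> (d - 1) * d ^ (q - 1 - k)" by (intro mult_le_mono1) linarith
    qed
    show "\<exists>a\<in>{..<q}. w a * d ^ (q - 1 - a) < (d - 1) * d ^ (q - 1 - a)"
      using lt assms(3) d2 by (intro bexI[of _ k]) auto
  qed simp
  then show False using assms(2) vl_const by simp
qed

lemma vl_rot: "d * vl w + w 0 = w 0 * d ^ q + vl (sh w 1)"
proof -
  obtain r where qr: "q = Suc r" using q2 by (cases q) auto
  have v1: "vl w = w 0 * d ^ r + (\<Sum>k<r. w (Suc k) * d ^ (r - Suc k))"
    unfolding vl_def by (simp only: qr sum.lessThan_Suc_shift) simp
  have v2: "vl (sh w 1) = (\<Sum>k<r. w (Suc k) * d ^ (r - k)) + w 0"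
  proof -
    have "vl (sh w 1) = (\<Sum>k<Suc r. w ((1 + k) mod Suc r) * d ^ (r - k))"
      unfolding vl_def sh_def by (simp add: qr)
    also have "\<dots> = (\<Sum>k<r. w ((1 + k) mod Suc r) * d ^ (r - k)) + w 0"
      by (simp add: sum.lessThan_Suc)
    also have "(\<Sum>k<r. w ((1 + k) mod Suc r) * d ^ (r - k)) = (\<Sum>k<r. w (Suc k) * d ^ (r - k))"
      by (rule sum.cong) auto
    finally show ?thesis .
  qed
  have "d * (\<Sum>k<r. w (Suc k) * d ^ (r - Suc k)) = (\<Sum>k<r. w (Suc k) * d ^ (r - k))"
    unfolding sum_distrib_left
  proof (rule sum.cong)
    fix k assume "k \<in> {..<r}"
    then have "r - k = Suc (r - Suc k)" by auto
    then show "d * (w (Suc k) * d ^ (r - Suc k)) = w (Suc k) * d ^ (r - k)" by simp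
  qed simp
  then show ?thesis using v1 v2 qr by (simp add: algebra_simps)
qed


lemma sh_digits: "(\<And>k. k < q \<Longrightarrow> w k < d) \<Longrightarrow> k < q \<Longrightarrow> sh w s k < d"
  unfolding sh_def using q2 by simp

lemma rot_mod:
  assumes dig: "\<And>k. k < q \<Longrightarrow> w k < d" and lt: "vl w < D"
  shows "vl (sh w 1) < D" "d * vl w mod D = vl (sh w 1)" "d * vl w div D = w 0"
proof -
  have le: "vl (sh w 1) \<le> D" by (rule vl_le) (rule sh_digits[OF dig])
  show lt2: "vl (sh w 1) < D"
  proof (rule ccontr)
    assume "\<not> vl (sh w 1) < D"
    then have eq: "vl (sh w 1) = D" using le by simp
    have "vl w = vl (\<lambda>_. d - 1)"
    proof (rule vl_cong)
      fix k assume k: "k < q"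
      have "(k + q - 1) mod q < q" using q2 by simp
      then have "sh w 1 ((k + q - 1) mod q) = d - 1"
        using vl_D[OF sh_digits[OF dig] eq] by blast
      moreover have "(1 + (k + q - 1) mod q) mod q = k"
      proof -
        have "(1 + (k + q - 1) mod q) mod q = (1 + (k + q - 1)) mod q" by (metis mod_add_right_eq)
        also have "\<dots> = (k + q) mod q" using q2 by simp
        finally show ?thesis using k by simp
      qed
      ultimately show "w k = d - 1" unfolding sh_def by simp
    qed
    then show False using lt vl_const by simp
  qed
  have "d * vl w + w 0 = w 0 * (D + 1) + vl (sh w 1)" using vl_rot D_plus by simp
  then have e: "d * vl w = w 0 * D + vl (sh w 1)" by simp
  show "d * vl w mod D = vl (sh w 1)" using e lt2 by simp
  show "d * vl w div D = w 0" using e lt2 by simp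
qed

lemma sh_sh: "vl (sh (sh w s) 1) = vl (sh w (Suc s))"
  by (rule vl_cong) (simp add: sh_def mod_add_right_eq)

definition P :: "nat \<Rightarrow> nat \<Rightarrow> nat" where "P V s = d ^ s * V mod D"

lemma P_vl:
  assumes dig: "\<And>k. k < q \<Longrightarrow> w k < d" and lt: "vl w < D"
  shows "P (vl w) s = vl (sh w s)"
proof (induction s)
  case 0
  have "vl (sh w 0) = vl w" by (rule vl_cong) (simp add: sh_def)
  then show ?case using lt by (simp add: P_def)
next
  case (Suc s)
  have lts: "vl (sh w s) < D" using Suc[symmetric] D_ge by (simp add: P_def)
  have "P (vl w) (Suc s) = d * P (vl w) s mod D" by (simp add: P_def mod_mult_right_eq mult.assoc)
  also have "\<dots> = vl (sh (sh w s) 1)" using Suc rot_mod(2)[OF sh_digits[OF dig] lts] by simp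
  finally show ?case using sh_sh by simp
qed

lemma fd_P:
  assumes dig: "\<And>k. k < q \<Longrightarrow> w k < d" and lt: "vl w < D"
  shows "fd (P (vl w) s) = w (s mod q)"
proof -
  have lts: "vl (sh w s) < D" using P_vl[OF dig lt, of s, symmetric] D_ge by (simp add: P_def)
  show ?thesis unfolding fd_def using rot_mod(3)[OF sh_digits[OF dig] lts] P_vl[OF dig lt, of s]
    by (simp add: sh_def)
qed

lemma dq_mod: "d ^ q mod D = 1"
proof -
  have "d ^ q mod D = (D + 1) mod D" using D_plus by simp
  also have "\<dots> = 1" using D_ge by (simp add: mod_Suc)
  finally show ?thesis .
qed

lemma P_add: "P V (s + k) = d ^ k * P V s mod D"
proof -
  have "d ^ k * P V s mod D = d ^ k * (d ^ s * V) mod D" unfolding P_def by (rule mod_mult_right_eq)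
  also have "d ^ k * (d ^ s * V) = d ^ (s + k) * V" by (simp add: power_add)
  finally show ?thesis by (simp add: P_def)
qed

lemma P_q: "P V (s + q) = P V s"
proof -
  have "P V (s + q) = d ^ q * P V s mod D" by (rule P_add)
  also have "\<dots> = (d ^ q mod D) * P V s mod D" by (simp add: mod_mult_left_eq)
  also have "\<dots> = P V s" using dq_mod by (simp add: P_def)
  finally show ?thesis .
qed

lemma P_mod: "P V s = P V (s mod q)"
proof -
  have "P V (s mod q + q * j) = P V (s mod q)" for j
  proof (induction j)
    case (Suc j)
    have "s mod q + q * Suc j = (s mod q + q * j) + q" by simp
    then show ?case using Suc P_q[of V "s mod q + q * j"] by (simp only:)
  qed simp
  from this[of "s div q"] show ?thesis by simp
qed

lemma P_lt: "P V s < D" using D_ge by (simp add: P_def)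
lemma P_0: "V < D \<Longrightarrow> P V 0 = V" by (simp add: P_def)
lemma P_1: "P V (Suc s) = d * P V s mod D" using P_add[of V s 1] by simp
lemma P_P: "P (P V s) k = P V (s + k)"
  using P_add[of V s k] by (simp add: P_def)


lemma P_range: assumes "P V s = P W s'" shows "range (P V) \<subseteq> range (P W)"
proof
  fix y assume "y \<in> range (P V)"
  then obtain x where y: "y = P V x" by auto
  have "P V x = P V (x + q * s)" using P_mod[of V x] P_mod[of V "x + q * s"] by simp
  also have "x + q * s = s + (x + q * s - s)"
  proof -
    have "s \<le> q * s" using q2 by simp
    then show ?thesis by arith
  qed
  also have "P V (s + (x + q * s - s)) = P (P W s') (x + q * s - s)" by (simp add: P_P[symmetric] assms)
  also have "\<dots> = P W (s' + (x + q * s - s))" by (simp add: P_P)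
  finally show "y \<in> range (P W)" using y by simp
qed

definition e :: "nat \<Rightarrow> real" where "e X = real X / real D"

lemma e_less: "e X < e Y \<longleftrightarrow> X < Y"
  using D_ge unfolding e_def by (simp add: divide_less_cancel)
lemma e_le: "e X \<le> e Y \<longleftrightarrow> X \<le> Y"
  using D_ge unfolding e_def by (simp add: divide_le_cancel)
lemma e_inj: "e X = e Y \<longleftrightarrow> X = Y" using D_ge by (simp add: e_def)


lemma sigma_e: "sigma d (e X) = e (d * X mod D)"
proof -
  have nd: "d * X = D * (d * X div D) + d * X mod D" by simp
  have dec: "real d * real X = real D * real (d * X div D) + real (d * X mod D)"
    using arg_cong[OF nd, of real] by (simp only: of_nat_add of_nat_mult)
  have Dp: "real D > 0" using D_ge by simp
  have "real d * e X = real (d * X div D) + e (d * X mod D)"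
    unfolding e_def using Dp dec by (simp add: field_simps)
  then have "real d * e X - e (d * X mod D) \<in> \<int>" by simp
  moreover have "0 \<le> e (d * X mod D)" "e (d * X mod D) < 1" using D_ge by (auto simp: e_def)
  ultimately show ?thesis unfolding sigma_def by (simp add: frac_unique_iff)
qed
lemma sigma_iter: "V < D \<Longrightarrow> (sigma d ^^ s) (e V) = e (P V s)"
proof (induction s)
  case 0 then show ?case by (simp add: P_0)
next
  case (Suc s) then show ?case by (simp add: sigma_e P_1)
qed

lemma fd_mono: "X \<le> Y \<Longrightarrow> fd X \<le> fd Y" unfolding fd_def by (simp add: div_le_mono)

lemma fd_lt: "fd X < fd Y \<Longrightarrow> X < Y" using fd_mono by (meson not_le)

lemma fd_eq_step: assumes "fd X = fd Y" "X < Y" shows "d * X mod D < d * Y mod D"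
proof -
  have "d * X = D * fd X + d * X mod D" "d * Y = D * fd Y + d * Y mod D"
    unfolding fd_def by simp_all
  moreover have "d * X < d * Y" using assms(2) d2 by simp
  ultimately show ?thesis using assms(1) by (metis nat_add_left_cancel_less)
qed


lemma P1: "P X 1 = d * X mod D" using P_1[of X 0] by (simp add: P_def)

lemma cmp_strict:
  "X < D \<Longrightarrow> Y < D \<Longrightarrow> (\<forall>j\<le>J. fd (P X j) \<le> fd (P Y j)) \<Longrightarrow> fd (P X J) < fd (P Y J) \<Longrightarrow> X < Y"
proof (induction J arbitrary: X Y)
  case 0 then show ?case using fd_lt by (simp add: P_0)
next
  case (Suc J)
  have "\<forall>j\<le>J. fd (P (P X 1) j) \<le> fd (P (P Y 1) j)" using Suc.prems(3) by (simp add: P_P)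
  moreover have "fd (P (P X 1) J) < fd (P (P Y 1) J)" using Suc.prems(4) by (simp add: P_P)
  ultimately have lt1: "P X 1 < P Y 1" using Suc.IH P_lt by blast
  have f0: "fd X \<le> fd Y" using Suc.prems(3) Suc.prems(1,2) by (auto simp: P_0 dest: spec[of _ 0])
  show ?case
  proof (rule ccontr)
    assume "\<not> X < Y"
    then have "Y < X \<or> Y = X" by auto
    then show False
    proof
      assume yx: "Y < X"
      then have "fd Y \<le> fd X" using fd_mono by simp
      then have "fd X = fd Y" using f0 by simp
      then have "d * Y mod D < d * X mod D" using fd_eq_step yx by simp
      then show False using lt1 P1[of X] P1[of Y] by simp
    qed (use lt1 in simp)
  qed
qed

lemma cmp_eq_aux:
  assumes "X < D" "Y < D" "\<forall>j<q. fd (P X j) = fd (P Y j)" "X < Y"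
  shows False
proof -
  have "j \<le> q \<Longrightarrow> P X j < P Y j \<and> P Y j - P X j = d ^ j * (Y - X)" for j
  proof (induction j)
    case 0 then show ?case using assms by (simp add: P_0)
  next
    case (Suc j)
    then have IH: "P X j < P Y j" "P Y j - P X j = d ^ j * (Y - X)" and jq: "j < q" by auto
    have fe: "fd (P X j) = fd (P Y j)" using assms(3) jq by simp
    have a1: "d * P X j = D * fd (P X j) + P X (Suc j)" unfolding fd_def P_1 by simp
    have a2: "d * P Y j = D * fd (P Y j) + P Y (Suc j)" unfolding fd_def P_1 by simp
    have "d * P X j < d * P Y j" using IH d2 by simp
    then have lt: "P X (Suc j) < P Y (Suc j)" using a1 a2 fe by (metis nat_add_left_cancel_less)
    have "P Y (Suc j) - P X (Suc j) = d * P Y j - d * P X j" using a1 a2 fe by simp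
    also have "\<dots> = d * (P Y j - P X j)" by (simp add: diff_mult_distrib2)
    finally show ?case using lt IH by simp
  qed
  from this[of q] have "P Y q - P X q = d ^ q * (Y - X)" by simp
  moreover have "d ^ q * (Y - X) \<ge> d ^ q * 1" using assms(4) by (intro mult_le_mono2) simp
  moreover have "P Y q < D" by (rule P_lt)
  ultimately show False using D_plus by linarith
qed

lemma cmp_le:
  assumes "X < D" "Y < D" "\<forall>j<q. fd (P X j) \<le> fd (P Y j)" "X \<noteq> Y"
  shows "X < Y"
proof (cases "\<forall>j<q. fd (P X j) = fd (P Y j)")
  case True
  then show ?thesis using cmp_eq_aux[OF assms(1,2) True] cmp_eq_aux[OF assms(2,1)] True assms(4)
    by (metis linorder_neqE_nat)
next
  case False
  then obtain J where J: "J < q" "fd (P X J) \<noteq> fd (P Y J)" by auto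
  then have "fd (P X J) < fd (P Y J)" using assms(3) by (simp add: order_le_neq_trans)
  moreover have "\<forall>j\<le>J. fd (P X j) \<le> fd (P Y j)" using assms(3) J(1) by auto
  ultimately show ?thesis using cmp_strict[OF assms(1,2)] by blast
qed
end

locale mn = dq +
  fixes n pn psn :: nat and a :: "nat \<Rightarrow> nat \<Rightarrow> nat"
  assumes n1: "n \<ge> 1" and pn_lt: "pn < q" and pn_pos: "0 < pn"
    and inv: "(pn * psn) mod q = 1"
    and dig: "\<And>i k. i \<in> {1..n} \<Longrightarrow> k < q \<Longrightarrow> a i k < d"
    and Vlt: "\<And>i. i \<in> {1..n} \<Longrightarrow> vl (a i) < D"
begin

definition N where "N = n * q"
definition ix where "ix m = m mod n + 1"
definition kk where "kk m = (m div n * psn) mod q"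
definition Pt where "Pt m = P (vl (a (ix m))) (kk m)"
definition c where "c m = a (ix m) (kk m)"

lemma ix_in: "ix m \<in> {1..n}" using n1 by (simp add: ix_def Suc_le_eq)
lemma kk_lt: "kk m < q" using q2 by (simp add: kk_def)
lemma N_ge: "N \<ge> 2" "n \<le> N" "N = n * q"
proof -
  have "n * 2 \<le> n * q" using q2 by simp
  moreover have "1 * q \<le> n * q" using n1 by (rule mult_le_mono1)
  ultimately show "N \<ge> 2" "n \<le> N" "N = n * q" using n1 q2 unfolding N_def by linarith+
qed

lemma fd_Pt: "fd (Pt m) = c m"
  unfolding Pt_def c_def using fd_P[OF dig[OF ix_in[of m]] Vlt[OF ix_in[of m]], of "kk m"] kk_lt[of m] by simp

lemma Pt_lt: "Pt m < D" by (simp add: Pt_def P_lt)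

lemma dm: "r < n \<Longrightarrow> (n * y + r) div n = y" "r < n \<Longrightarrow> (n * y + r) mod n = r"
  by simp_all

lemma rot_decomp: "(x + j * (n * pn)) mod N = n * ((x div n + j * pn) mod q) + x mod n"
proof -
  have eq: "x + j * (n * pn) = x + n * (j * pn)" by (simp add: ac_simps)
  have "(x + j * (n * pn)) div n = x div n + j * pn" unfolding eq using n1 by simp
  moreover have "(x + j * (n * pn)) mod n = x mod n" unfolding eq by simp
  ultimately show ?thesis unfolding N_def using mod_mult2_eq[of "x + j * (n * pn)" n q] by simp
qed

lemma inv_mod: "(j * pn * psn) mod q = j mod q"
proof -
  have "(j * pn * psn) mod q = (j * ((pn * psn) mod q)) mod q" by (simp add: mod_mult_right_eq mult.assoc)
  then show ?thesis using inv by simp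
qed

lemma ix_rot: "ix ((x + j * (n * pn)) mod N) = ix x"
  unfolding rot_decomp ix_def using n1 by simp

lemma kk_rot: "kk ((x + j * (n * pn)) mod N) = (kk x + j) mod q"
proof -
  have "(x + j * (n * pn)) mod N div n = (x div n + j * pn) mod q"
    unfolding rot_decomp using n1 by simp
  then have "kk ((x + j * (n * pn)) mod N) = ((x div n + j * pn) mod q * psn) mod q" by (simp add: kk_def)
  also have "\<dots> = ((x div n + j * pn) * psn) mod q" by (simp add: mod_mult_left_eq)
  also have "\<dots> = (x div n * psn + j * pn * psn) mod q" by (simp add: algebra_simps)
  also have "\<dots> = (x div n * psn mod q + (j * pn * psn) mod q) mod q" by (simp add: mod_add_eq)
  also have "\<dots> = (kk x + j mod q) mod q" by (simp add: kk_def inv_mod)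
  also have "\<dots> = (kk x + j) mod q" by (simp add: mod_add_right_eq)
  finally show ?thesis .
qed

lemma Pt_rot: "P (Pt m) j = Pt ((m + j * (n * pn)) mod N)"
proof -
  have "P (Pt m) j = P (vl (a (ix m))) (kk m + j)" by (simp add: Pt_def P_P)
  also have "\<dots> = P (vl (a (ix m))) ((kk m + j) mod q)" by (rule P_mod)
  finally show ?thesis by (simp add: Pt_def ix_rot kk_rot)
qed

end

locale mo = mn +
  assumes injP: "\<And>i. i \<in> {1..n} \<Longrightarrow> inj_on (P (vl (a i))) {..<q}"
    and disj: "\<And>i j s s'. i \<in> {1..n} \<Longrightarrow> j \<in> {1..n} \<Longrightarrow> i \<noteq> j \<Longrightarrow> P (vl (a i)) s \<noteq> P (vl (a j)) s'"
begin

lemma div_lt: "m < N \<Longrightarrow> m div n < q"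
  unfolding N_def using n1 by (simp add: less_mult_imp_div_less mult.commute)

lemma div_kk: assumes "m < N" shows "m div n = (kk m * pn) mod q"
proof -
  have "(kk m * pn) mod q = (m div n * psn * pn) mod q" unfolding kk_def by (simp add: mod_mult_left_eq)
  also have "\<dots> = (m div n * pn * psn) mod q" by (simp add: ac_simps)
  also have "\<dots> = m div n mod q" by (rule inv_mod)
  also have "\<dots> = m div n" using div_lt[OF assms] by simp
  finally show ?thesis by simp
qed

lemma Pt_inj: assumes "m < N" "m' < N" "Pt m = Pt m'" shows "m = m'"
proof -
  have ixe: "ix m = ix m'" using disj[OF ix_in ix_in] assms(3) unfolding Pt_def by blast
  then have "kk m = kk m'" using injP[OF ix_in[of m]] assms(3) kk_lt[of m] kk_lt[of m']
    unfolding Pt_def inj_on_def by auto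
  then have "m div n = m' div n" using div_kk assms(1,2) by simp
  moreover have "m mod n = m' mod n" using ixe by (simp add: ix_def)
  ultimately show ?thesis by (metis div_mult_mod_eq)
qed

lemma Pt_cover:
  assumes i: "i \<in> {1..n}"
  shows "\<exists>y<q. (i - 1) + n * y < N \<and> Pt ((i - 1) + n * y) = P (vl (a i)) s"
proof -
  obtain r0 where r0: "i = Suc r0" "r0 < n" using i by (cases i) auto
  define y where "y = ((s mod q) * pn) mod q"
  have yq: "y < q" using q2 by (simp add: y_def)
  have "r0 + n * y < n * (y + 1)" using r0 by simp
  also have "\<dots> \<le> n * q" using yq by (intro mult_le_mono2) simp
  finally have mN: "r0 + n * y < N" by (simp add: N_def)
  have "(r0 + n * y) mod n = r0" using r0 by simp
  then have ixm: "ix (r0 + n * y) = i" by (simp add: ix_def r0)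
  have "kk (r0 + n * y) = (y * psn) mod q" using r0 by (simp add: kk_def)
  also have "\<dots> = ((s mod q) * pn * psn) mod q" unfolding y_def by (metis mod_mult_left_eq)
  also have "\<dots> = s mod q" using inv_mod[of "s mod q"] by simp
  finally have "Pt (r0 + n * y) = P (vl (a i)) (s mod q)" using ixm by (simp add: Pt_def)
  then show ?thesis using mN yq P_mod[of "vl (a i)" s] r0 by auto
qed

lemma chain: assumes "\<And>m. m + 1 < N \<Longrightarrow> Pt m < Pt (m + 1)"
  shows "i < j \<Longrightarrow> j < N \<Longrightarrow> Pt i < Pt j"
proof (induction j)
  case 0 then show ?case by simp
next
  case (Suc j)
  show ?case
  proof (cases "i = j")
    case True then show ?thesis using assms Suc.prems by simp
  next
    case False
    then have "Pt i < Pt j" using Suc by simp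
    also have "Pt j < Pt (Suc j)" using assms Suc.prems by simp
    finally show ?thesis .
  qed
qed

lemma npn_le: "n * pn \<le> N - n" "n \<le> n * pn"
proof -
  have "n * pn \<le> n * (q - 1)" using pn_lt by (intro mult_le_mono2) simp
  also have "\<dots> = N - n" by (simp add: N_def diff_mult_distrib2)
  finally show "n * pn \<le> N - n" .
  show "n \<le> n * pn" using pn_pos by simp
qed

lemma b_of_inc:
  assumes inc: "\<And>m. m + 1 < N \<Longrightarrow> Pt m < Pt (m + 1)"
  shows "\<And>m. m + 1 < N \<Longrightarrow> c m \<le> c (m + 1)" and "c (N - n * pn - 1) < c (N - n * pn)"
proof -
  show "\<And>m. m + 1 < N \<Longrightarrow> c m \<le> c (m + 1)" using inc fd_mono fd_Pt by (metis less_imp_le)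
  define M where "M = N - n * pn"
  have Mb: "1 \<le> M" "M < N" "M - 1 + 1 = M" "M - 1 + n * pn = N - 1" "M + n * pn = N"
    using npn_le n1 N_ge by (auto simp: M_def)
  have lt: "Pt (M - 1) < Pt M" using inc[of "M - 1"] Mb by simp
  have le: "c (M - 1) \<le> c M" using fd_mono[OF less_imp_le[OF lt]] by (simp add: fd_Pt)
  have "c (M - 1) \<noteq> c M"
  proof
    assume "c (M - 1) = c M"
    then have "fd (Pt (M - 1)) = fd (Pt M)" by (simp add: fd_Pt)
    from fd_eq_step[OF this lt] have "P (Pt (M - 1)) 1 < P (Pt M) 1" using P1[of "Pt (M - 1)"] P1[of "Pt M"] by simp
    then have "Pt ((M - 1 + n * pn) mod N) < Pt ((M + n * pn) mod N)" by (simp add: Pt_rot)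
    then have "Pt (N - 1) < Pt 0" using Mb N_ge by simp
    moreover have "Pt 0 < Pt (N - 1)" using chain[OF inc, of 0 "N - 1"] N_ge by simp
    ultimately show False by simp
  qed
  then show "c (N - n * pn - 1) < c (N - n * pn)" using le by (simp add: M_def)
qed


lemma rmod_n: "((x + j * (n * pn)) mod N) mod n = x mod n"
  unfolding rot_decomp using n1 by simp

lemma Nm1_mod: "(N - 1) mod n = n - 1"
proof -
  obtain n0 where n0: "n = Suc n0" using n1 by (cases n) auto
  have m1: "n * (q - 1) = n * q - n" by (simp add: diff_mult_distrib2)
  have "n * 2 \<le> n * q" using q2 by simp
  then have eq: "N - 1 = n0 + n * (q - 1)" unfolding m1 N_def using n0 by linarith
  show ?thesis unfolding eq mod_mult_self2 using n0 by simp
qed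

lemma nowrap: assumes "(x + j * (n * pn)) mod N \<noteq> N - 1"
  shows "(Suc x + j * (n * pn)) mod N = (x + j * (n * pn)) mod N + 1"
proof -
  have lt: "(x + j * (n * pn)) mod N < N" using N_ge(1) by simp
  have "(Suc x + j * (n * pn)) mod N = Suc (x + j * (n * pn)) mod N" by simp
  also have "\<dots> = Suc ((x + j * (n * pn)) mod N)" using lt assms by (simp add: mod_Suc)
  finally show ?thesis by simp
qed

lemma sub_arith: assumes "r < N" "(r + n * pn) mod N = N - 1" shows "r = N - n * pn - 1"
proof (cases "r + n * pn < N")
  case True then show ?thesis using assms by simp
next
  case False
  then have "(r + n * pn) mod N = (r + n * pn - N) mod N" by (simp add: le_mod_geq)
  also have "\<dots> = r + n * pn - N" using assms(1) npn_le N_ge by simp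
  finally show ?thesis using assms npn_le N_ge n1 by linarith
qed

lemma inc_of_b:
  assumes mono: "\<And>m. m + 1 < N \<Longrightarrow> c m \<le> c (m + 1)"
    and edge: "c (N - n * pn - 1) < c (N - n * pn)"
    and m: "m + 1 < N"
  shows "Pt m < Pt (m + 1)"
proof -
  define r where "r j = (m + j * (n * pn)) mod N" for j
  have PX: "fd (P (Pt m) j) = c (r j)" for j by (simp add: Pt_rot fd_Pt r_def)
  have PY: "r j \<noteq> N - 1 \<Longrightarrow> fd (P (Pt (m + 1)) j) = c (r j + 1)" for j
    using nowrap[of m j] by (simp add: Pt_rot fd_Pt r_def)
  have rN: "r j < N" for j using N_ge(1) by (simp add: r_def)
  have mono': "r j \<noteq> N - 1 \<Longrightarrow> c (r j) \<le> c (r j + 1)" for j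
    using mono[of "r j"] rN[of j] by simp
  show ?thesis
  proof (cases "m mod n = n - 1")
    case False
    have "r j \<noteq> N - 1" for j
    proof
      assume "r j = N - 1"
      then have "r j mod n = n - 1" using Nm1_mod by simp
      then show False using False rmod_n by (simp add: r_def)
    qed
    then have "\<forall>j<q. fd (P (Pt m) j) \<le> fd (P (Pt (m + 1)) j)" using PX PY mono' by simp
    moreover have "Pt m \<noteq> Pt (m + 1)"
    proof
      assume "Pt m = Pt (m + 1)"
      then have "m = m + 1" using Pt_inj[of m "m + 1"] m by simp
      then show False by simp
    qed
    ultimately show ?thesis using cmp_le Pt_lt by blast
  next
    case True
    define g where "g = m div n"
    have mdec: "m = n * g + (n - 1)" unfolding g_def by (metis True mult_div_mod_eq)
    have gq: "g + 1 < q"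
    proof -
      have "n * (g + 1) = m + 1" using mdec n1 by simp
      then have "n * (g + 1) < n * q" using m by (simp add: N_def)
      then show ?thesis using mult_less_cancel1[of n "g + 1" q] by blast
    qed
    define w where "w = ((q - (g + 1)) * psn) mod q"
    have wq: "w < q" using q2 by (simp add: w_def)
    have "(g + w * pn) mod q = (g + (q - (g + 1)) * psn * pn) mod q"
      unfolding w_def by (metis mod_add_right_eq mod_mult_left_eq)
    also have "\<dots> = (g + (q - (g + 1)) mod q) mod q"
      using inv_mod[of "q - (g + 1)"] by (metis mod_add_right_eq mult.assoc mult.commute)
    also have "\<dots> = (g + (q - (g + 1))) mod q" by (metis mod_add_right_eq)
    also have "\<dots> = q - 1" using gq by simp
    finally have gw: "(g + w * pn) mod q = q - 1" .
    have "r w = n * (q - 1) + (n - 1)"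
      unfolding r_def rot_decomp using True gw by (simp add: g_def)
    also have "\<dots> = N - 1" using n1 q2 by (simp add: N_def algebra_simps)
    finally have rw: "r w = N - 1" .
    define j1 where "j1 = (LEAST j. r j = N - 1)"
    have j1: "r j1 = N - 1" using rw unfolding j1_def by (rule LeastI)
    have j1w: "j1 \<le> w" using rw unfolding j1_def by (rule Least_le)
    have below: "j < j1 \<Longrightarrow> r j \<noteq> N - 1" for j unfolding j1_def by (rule not_less_Least)
    have "r 0 = m" using m by (simp add: r_def)
    have "j1 \<noteq> 0"
    proof
      assume "j1 = 0"
      then have "r 0 = N - 1" using j1 by simp
      then show False using \<open>r 0 = m\<close> m by simp
    qed
    then obtain J where J: "j1 = Suc J" by (cases j1) auto
    have eqJ: "m + Suc J * (n * pn) = (m + J * (n * pn)) + n * pn" by simp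
    have "r (Suc J) = (r J + n * pn) mod N" unfolding r_def eqJ by (rule mod_add_left_eq[symmetric])
    then have "r J = N - n * pn - 1" using j1 J sub_arith rN by simp
    moreover have "r J \<noteq> N - 1" using below J by simp
    moreover have "N - n * pn - 1 + 1 = N - n * pn" using npn_le n1 by linarith
    ultimately have strict: "fd (P (Pt m) J) < fd (P (Pt (m + 1)) J)"
      using PX[of J] PY[of J] edge by simp
    have "\<forall>j\<le>J. fd (P (Pt m) j) \<le> fd (P (Pt (m + 1)) j)" using PX PY mono' below J by simp
    then show ?thesis using cmp_strict[OF Pt_lt Pt_lt] strict by blast
  qed
qed

definition T where "T i = e (vl (a i))"

lemma orb_T: "i \<in> {1..n} \<Longrightarrow> orb d (T i) = e ` range (P (vl (a i)))"
  unfolding orb_def T_def using sigma_iter[OF Vlt] by (auto simp: image_iff)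

lemma Pt_i: "i \<in> {1..n} \<Longrightarrow> Pt (i - 1) = vl (a i)"
proof -
  assume i: "i \<in> {1..n}"
  then have "ix (i - 1) = i" "kk (i - 1) = 0" by (auto simp: ix_def kk_def)
  then show ?thesis using P_0[OF Vlt[OF i]] by (simp add: Pt_def)
qed

lemma Aset: "(\<Union>i\<in>{1..n}. orb d (T i)) = e ` Pt ` {..<N}"
proof
  show "(\<Union>i\<in>{1..n}. orb d (T i)) \<subseteq> e ` Pt ` {..<N}"
  proof
    fix x assume "x \<in> (\<Union>i\<in>{1..n}. orb d (T i))"
    then obtain i s where i: "i \<in> {1..n}" and x: "x = e (P (vl (a i)) s)" using orb_T by auto
    from Pt_cover[OF i, of s] obtain y where "(i - 1) + n * y < N" "Pt ((i - 1) + n * y) = P (vl (a i)) s"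
      by blast
    then show "x \<in> e ` Pt ` {..<N}" using x by force
  qed
  show "e ` Pt ` {..<N} \<subseteq> (\<Union>i\<in>{1..n}. orb d (T i))"
  proof
    fix x assume "x \<in> e ` Pt ` {..<N}"
    then obtain m where "x = e (Pt m)" by auto
    then have "x \<in> orb d (T (ix m))" using orb_T[OF ix_in] by (auto simp: Pt_def)
    then show "x \<in> (\<Union>i\<in>{1..n}. orb d (T i))" using ix_in by blast
  qed
qed

lemma inj_ePt: "inj_on (e \<circ> Pt) {..<N}"
  by (auto simp: inj_on_def e_inj intro: Pt_inj)

lemma card_A: "card (e ` Pt ` {..<N}) = N"
  using card_image[OF inj_ePt] by (simp add: image_comp)

lemma nat_rot: assumes "P0 mod int N = int (n * pn)"
  shows "nat ((int j + P0) mod int N) = (j + n * pn) mod N"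
proof -
  have "(int j + P0) mod int N = (int j + P0 mod int N) mod int N" by (simp add: mod_add_right_eq)
  also have "\<dots> = int ((j + n * pn) mod N)" using assms by (simp add: of_nat_mod)
  finally show ?thesis by simp
qed


lemma a_of_inc:
  assumes inc: "\<And>m. m + 1 < N \<Longrightarrow> Pt m < Pt (m + 1)"
    and P0: "P0 mod int N = int (n * pn)"
  shows "(\<forall>i\<in>{1..n}. \<forall>x\<in>orb d (T i). T i \<le> x) \<and> rot_shift d (\<Union>i\<in>{1..n}. orb d (T i)) P0"
proof
  define L where "L = map (e \<circ> Pt) [0..<N]"
  have sL: "sorted_wrt (<) L" unfolding L_def sorted_wrt_iff_nth_less
    using chain[OF inc] by (simp add: e_less)
  have setL: "set L = (\<Union>i\<in>{1..n}. orb d (T i))" unfolding Aset L_def by (auto simp: image_iff)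
  have fin: "finite (\<Union>i\<in>{1..n}. orb d (T i))" unfolding Aset by simp
  have sl: "sorted_list_of_set (\<Union>i\<in>{1..n}. orb d (T i)) = L"
    using strict_sorted_equal[OF sL strict_sorted_list_of_set] fin setL by simp
  have lenL: "length L = N" by (simp add: L_def)
  show "rot_shift d (\<Union>i\<in>{1..n}. orb d (T i)) P0"
    unfolding rot_shift_def Let_def sl lenL
  proof (intro conjI fin allI impI)
    fix j assume j: "j < N"
    have "sigma d (L ! j) = e (P (Pt j) 1)" using j P1[of "Pt j"] by (simp add: L_def sigma_e)
    also have "\<dots> = L ! ((j + n * pn) mod N)" using N_ge(1) by (simp add: Pt_rot L_def)
    finally show "sigma d (L ! j) = L ! nat ((int j + P0) mod int N)" using nat_rot[OF P0] by simp
  qed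
  show "\<forall>i\<in>{1..n}. \<forall>x\<in>orb d (T i). T i \<le> x"
  proof (intro ballI)
    fix i x assume i: "i \<in> {1..n}" and x: "x \<in> orb d (T i)"
    then obtain s where xs: "x = e (P (vl (a i)) s)" using orb_T by auto
    from Pt_cover[OF i, of s] obtain y where y: "(i - 1) + n * y < N" "Pt ((i - 1) + n * y) = P (vl (a i)) s"
      by blast
    have "Pt (i - 1) \<le> Pt ((i - 1) + n * y)"
      using chain[OF inc, of "i - 1" "(i - 1) + n * y"] y(1) n1 by (cases "y = 0") auto
    then show "T i \<le> x" using xs y Pt_i[OF i] by (simp add: T_def e_le)
  qed
qed


lemma inc_of_a:
  assumes amin: "\<forall>i\<in>{1..n}. \<forall>x\<in>orb d (T i). T i \<le> x"
    and rot: "rot_shift d (\<Union>i\<in>{1..n}. orb d (T i)) P0"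
    and P0: "P0 mod int N = int (n * pn)"
    and Tinc: "\<And>i j. i \<in> {1..n} \<Longrightarrow> j \<in> {1..n} \<Longrightarrow> i < j \<Longrightarrow> T i < T j"
  shows "\<And>m. m + 1 < N \<Longrightarrow> Pt m < Pt (m + 1)"
proof -
  define A where "A = (\<Union>i\<in>{1..n}. orb d (T i))"
  define L where "L = sorted_list_of_set A"
  have fin: "finite A" unfolding A_def Aset by simp
  have lenL: "length L = N" using card_A unfolding L_def A_def Aset by simp
  have setL: "set L = A" unfolding L_def using fin by simp
  have sL: "sorted_wrt (<) L" unfolding L_def by simp
  have rotL: "j < N \<Longrightarrow> sigma d (L ! j) = L ! ((j + n * pn) mod N)" for j
    using rot lenL nat_rot[OF P0] unfolding rot_shift_def Let_def A_def[symmetric] L_def[symmetric] by simp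
  have iterL: "j < N \<Longrightarrow> (sigma d ^^ k) (L ! j) = L ! ((j + k * (n * pn)) mod N)" for j k
  proof (induction k)
    case 0 then show ?case by simp
  next
    case (Suc k)
    have "(sigma d ^^ Suc k) (L ! j) = sigma d (L ! ((j + k * (n * pn)) mod N))" using Suc by simp
    also have "\<dots> = L ! (((j + k * (n * pn)) mod N + n * pn) mod N)" using rotL N_ge(1) by simp
    also have "((j + k * (n * pn)) mod N + n * pn) mod N = (j + Suc k * (n * pn)) mod N"
    proof -
      have "j + Suc k * (n * pn) = (j + k * (n * pn)) + n * pn" by simp
      then show ?thesis by (simp only: mod_add_left_eq)
    qed
    finally show ?case .
  qed
  have Lord: "a < N \<Longrightarrow> b < N \<Longrightarrow> a < b \<Longrightarrow> L ! a < L ! b" for a b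
    using sL lenL by (simp add: sorted_wrt_iff_nth_less)
  have Lord2: "a < N \<Longrightarrow> b < N \<Longrightarrow> L ! a < L ! b \<Longrightarrow> a < b" for a b
    using Lord[of b a] by (metis less_asym linorder_neqE_nat)
  have TA: "i \<in> {1..n} \<Longrightarrow> T i \<in> A" for i
    unfolding A_def orb_def by (auto intro!: bexI[of _ i] range_eqI[of _ _ 0])
  define r where "r i = (SOME j. j < N \<and> L ! j = T i)" for i
  have r: "i \<in> {1..n} \<Longrightarrow> r i < N \<and> L ! (r i) = T i" for i
  proof -
    assume "i \<in> {1..n}"
    then have "\<exists>j. j < N \<and> L ! j = T i" using TA setL lenL by (metis in_set_conv_nth)
    then show ?thesis unfolding r_def by (rule someI_ex)
  qed
  have rn: "i \<in> {1..n} \<Longrightarrow> r i < n" for i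
  proof (rule ccontr)
    assume i: "i \<in> {1..n}" and "\<not> r i < n"
    define x where "x = r i"
    have xn: "n \<le> x" "x < N" using \<open>\<not> r i < n\<close> r[OF i] by (auto simp: x_def)
    have g1: "1 \<le> x div n" using div_le_mono[OF xn(1), of n] n1 by simp
    have gq: "x div n < q" using div_lt xn by simp
    define k where "k = (q - 1) * psn"
    have "(x div n + k * pn) mod q = (x div n + ((q - 1) * pn * psn) mod q) mod q"
      unfolding k_def by (metis mod_add_right_eq mult.assoc mult.commute)
    also have "\<dots> = (x div n - 1 + q) mod q" using inv_mod[of "q - 1"] g1 q2 by simp
    also have "\<dots> = x div n - 1" using gq by simp
    finally have "(x + k * (n * pn)) mod N = n * (x div n - 1) + x mod n" by (simp add: rot_decomp)
    also have "\<dots> = x - n" using g1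
      by (metis add.commute diff_mult_distrib2 minus_mod_eq_mult_div mult_div_mod_eq nat_mult_1_right
          add_diff_assoc2 mult_le_mono2)
    finally have eqx: "(x + k * (n * pn)) mod N = x - n" .
    have "(sigma d ^^ k) (T i) \<in> orb d (T i)" unfolding orb_def by simp
    then have "T i \<le> (sigma d ^^ k) (T i)" using amin i by blast
    also have "(sigma d ^^ k) (T i) = L ! (x - n)" using iterL[of x k] eqx r[OF i] xn by (simp add: x_def)
    also have "L ! (x - n) < L ! x" using Lord xn n1 by simp
    finally show False using r[OF i] by (simp add: x_def)
  qed
  have rid: "i \<in> {1..n} \<Longrightarrow> r i = i - 1" for i
  proof (rule incr_id[of n r])
    show "\<And>i j. i \<in> {1..n} \<Longrightarrow> j \<in> {1..n} \<Longrightarrow> i < j \<Longrightarrow> r i < r j"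
      using r Tinc Lord2 by metis
  qed (use rn in auto)
  have LPt: "m < N \<Longrightarrow> L ! m = e (Pt m)" for m
  proof -
    assume m: "m < N"
    define k where "k = m div n * psn"
    have "(m div n * psn * pn) mod q = m div n"
      using inv_mod[of "m div n"] div_lt[OF m] by (simp add: ac_simps)
    then have "(m mod n + k * (n * pn)) mod N = m"
      unfolding rot_decomp k_def using n1 by (simp add: ac_simps)
    moreover have "m mod n < N" using m n1 N_ge by (meson le_trans mod_less_divisor not_le not_one_le_zero less_le_trans)
    ultimately have "L ! m = (sigma d ^^ k) (L ! (m mod n))" using iterL by simp
    also have "L ! (m mod n) = T (ix m)" using r[OF ix_in[of m]] rid[OF ix_in[of m]] by (simp add: ix_def)
    also have "(sigma d ^^ k) (T (ix m)) = e (P (vl (a (ix m))) k)"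
      unfolding T_def by (rule sigma_iter[OF Vlt[OF ix_in]])
    also have "\<dots> = e (Pt m)" using P_mod[of "vl (a (ix m))" k] by (simp add: Pt_def kk_def k_def)
    finally show ?thesis .
  qed
  fix m assume "m + 1 < N"
  then show "Pt m < Pt (m + 1)" using Lord[of m "m + 1"] LPt by (simp add: e_less)
qed

end

lemma l1: "((q::int) - p mod q) * (ps mod q) mod q = (- p * ps) mod q"
proof -
  have "[(q - p mod q) * (ps mod q) = (0 - p) * ps] (mod q)"
    by (intro cong_mult cong_diff) (auto simp: cong_def)
  then show ?thesis by (simp add: cong_def)
qed
lemma l2: "((q::int) - p mod q - 1) * (ps mod q) mod q = (- (p + 1) * ps) mod q"
proof -
  have "[(q - p mod q - 1) * (ps mod q) = (0 - p - 1) * ps] (mod q)"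
    by (intro cong_mult cong_diff) (auto simp: cong_def)
  moreover have "(0 - p - 1) * ps = - (p + 1) * ps" by simp
  ultimately show ?thesis by (simp only: cong_def)
qed

theorem theorem3p1:
  fixes d q n :: nat and p ps :: int
    and t :: "nat \<Rightarrow> real" and a :: "nat \<Rightarrow> nat \<Rightarrow> nat"
  assumes "d \<ge> 2" and "q \<ge> 2" and "n \<ge> 1"
    and "coprime p (int q)" and "[p * ps = 1] (mod int q)"
    and "\<forall>i\<in>{1..n}. 0 \<le> t i \<and> t i < 1"
    and "\<forall>i\<in>{1..n}. card (orb d (t i)) = q"
    and "\<forall>i\<in>{1..n}. \<forall>j\<in>{1..n}. i \<noteq> j \<longrightarrow> orb d (t i) \<noteq> orb d (t j)"
    and "\<forall>i\<in>{1..n}. \<forall>j\<in>{1..n}. i < j \<longrightarrow> t i < t j"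
    and "\<forall>i\<in>{1..n}. (\<forall>k<q. a i k < d) \<and> t i = tuple_pt d q (a i)"
  shows "((\<forall>i\<in>{1..n}. \<forall>x\<in>orb d (t i). t i \<le> x) \<and>
           rot_shift d (\<Union>i\<in>{1..n}. orb d (t i)) (int n * p))
       \<longleftrightarrow>
         ((\<forall>m. m + 1 < n * q \<longrightarrow>
              a (m mod n + 1) (nat ((int (m div n) * ps) mod int q))
                \<le> a ((m + 1) mod n + 1) (nat ((int ((m + 1) div n) * ps) mod int q))) \<and>
          a n (nat ((- (p + 1) * ps) mod int q)) < a 1 (nat ((- p * ps) mod int q)))"
proof -
  note h = assms
  interpret Q: dq d q using h(1,2) by unfold_locales
  define pn where "pn = nat (p mod int q)"
  define psn where "psn = nat (ps mod int q)"
  have qpos: "int q > 0" using h(2) by simp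
  have pn_int: "int pn = p mod int q" using qpos by (simp add: pn_def)
  have psn_int: "int psn = ps mod int q" using qpos by (simp add: psn_def)
  have "int pn < int q" using qpos pn_int by simp
  then have pn_lt: "pn < q" by simp
  have pn_pos: "0 < pn"
  proof (rule ccontr)
    assume "\<not> 0 < pn"
    then have "p mod int q = 0" using pn_int by simp
    then have "int q dvd p" by (simp add: dvd_eq_mod_eq_0)
    then have "int q dvd gcd p (int q)" by simp
    then show False using h(4) h(2) by simp
  qed
  have inv: "(pn * psn) mod q = 1"
  proof -
    have "int ((pn * psn) mod q) = (p mod int q) * (ps mod int q) mod int q"
      using pn_int psn_int by (simp add: of_nat_mod)
    also have "\<dots> = (p * ps) mod int q" by (simp add: mod_mult_eq)
    also have "\<dots> = 1 mod int q" using h(5) by (simp add: cong_def)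
    also have "\<dots> = 1" using h(2) by simp
    finally show ?thesis by simp
  qed
  have Dreal: "real Q.D = real d ^ q - 1" using Q.D_plus by (metis add_diff_cancel_right' of_nat_1 of_nat_add of_nat_power)
  have tT: "i \<in> {1..n} \<Longrightarrow> t i = Q.e (Q.vl (a i))" for i
    using h(10) unfolding tuple_pt_def Q.e_def Q.vl_def Dreal by simp
  have Vlt: "i \<in> {1..n} \<Longrightarrow> Q.vl (a i) < Q.D" for i
  proof -
    assume i: "i \<in> {1..n}"
    have "t i < 1" using h(6) i by blast
    then have "Q.e (Q.vl (a i)) < 1" using tT[OF i] by simp
    then show ?thesis using Q.D_ge by (simp add: Q.e_def)
  qed
  have orbt: "i \<in> {1..n} \<Longrightarrow> orb d (t i) = Q.e ` range (Q.P (Q.vl (a i)))" for i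
    unfolding orb_def tT using Q.sigma_iter[OF Vlt] by (auto simp: image_iff)
  have rangeP: "range (Q.P V) = Q.P V ` {..<q}" for V
    using Q.P_mod[of V] h(2) by (auto simp: image_iff) (metis mod_less_divisor neq0_conv not_numeral_le_zero lessThan_iff)
  interpret M: mo d q n pn psn a
  proof unfold_locales
    show "1 \<le> n" "pn < q" "0 < pn" "(pn * psn) mod q = 1" by (fact h(3) pn_lt pn_pos inv)+
    show "\<And>i k. i \<in> {1..n} \<Longrightarrow> k < q \<Longrightarrow> a i k < d" using h(10) by blast
    show "\<And>i. i \<in> {1..n} \<Longrightarrow> Q.vl (a i) < Q.D" by (rule Vlt)
    show "\<And>i. i \<in> {1..n} \<Longrightarrow> inj_on (Q.P (Q.vl (a i))) {..<q}"
    proof -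
      fix i assume i: "i \<in> {1..n}"
      have "card ((Q.e \<circ> Q.P (Q.vl (a i))) ` {..<q}) = card {..<q}"
      proof -
        have "card (orb d (t i)) = q" using h(7) i by blast
        then show ?thesis using orbt[OF i] rangeP by (simp add: image_comp)
      qed
      then have "inj_on (Q.e \<circ> Q.P (Q.vl (a i))) {..<q}" by (rule eq_card_imp_inj_on[OF finite_lessThan])
      then show "inj_on (Q.P (Q.vl (a i))) {..<q}" by (simp add: inj_on_def Q.e_inj)
    qed
    show "\<And>i j s s'. i \<in> {1..n} \<Longrightarrow> j \<in> {1..n} \<Longrightarrow> i \<noteq> j \<Longrightarrow> Q.P (Q.vl (a i)) s \<noteq> Q.P (Q.vl (a j)) s'"
    proof
      fix i j s s' assume i: "i \<in> {1..n}" and j: "j \<in> {1..n}" and ij: "i \<noteq> j"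
        and eq: "Q.P (Q.vl (a i)) s = Q.P (Q.vl (a j)) s'"
      have "range (Q.P (Q.vl (a i))) = range (Q.P (Q.vl (a j)))"
        using Q.P_range[OF eq] Q.P_range[OF eq[symmetric]] by blast
      then have "orb d (t i) = orb d (t j)" using orbt i j by simp
      then show False using h(8) i j ij by blast
    qed
  qed
  have tT': "i \<in> {1..n} \<Longrightarrow> t i = M.T i" for i by (simp add: M.T_def tT)
  have Tinc: "\<And>i j. i \<in> {1..n} \<Longrightarrow> j \<in> {1..n} \<Longrightarrow> i < j \<Longrightarrow> M.T i < M.T j"
    using h(9) tT' by metis
  have P0: "int n * p mod int M.N = int (n * pn)"
  proof -
    have "int n * p mod int M.N = int n * p mod (int n * int q)" by (simp add: M.N_def)
    also have "\<dots> = int n * (p mod int q)" by (rule mod_mult_mult1)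
    finally show ?thesis using pn_int by simp
  qed
  have LHS1: "(\<forall>i\<in>{1..n}. \<forall>x\<in>orb d (t i). t i \<le> x) = (\<forall>i\<in>{1..n}. \<forall>x\<in>orb d (M.T i). M.T i \<le> x)"
    using tT' by auto
  have LHS2: "(\<Union>i\<in>{1..n}. orb d (t i)) = (\<Union>i\<in>{1..n}. orb d (M.T i))"
    by (rule SUP_cong) (simp_all add: tT')
  have kkconv: "nat ((int j * ps) mod int q) = (j * psn) mod q" for j
  proof -
    have "int ((j * psn) mod q) = (int j * (ps mod int q)) mod int q" using psn_int by (simp add: of_nat_mod)
    also have "\<dots> = (int j * ps) mod int q" by (simp add: mod_mult_right_eq)
    finally show ?thesis by simp
  qed
  have cconv: "a (m mod n + 1) (nat ((int (m div n) * ps) mod int q)) = M.c m" for m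
    by (simp add: M.c_def M.ix_def M.kk_def kkconv)
  have mono_eq: "(\<forall>m. m + 1 < n * q \<longrightarrow>
              a (m mod n + 1) (nat ((int (m div n) * ps) mod int q))
                \<le> a ((m + 1) mod n + 1) (nat ((int ((m + 1) div n) * ps) mod int q)))
        \<longleftrightarrow> (\<forall>m. m + 1 < M.N \<longrightarrow> M.c m \<le> M.c (m + 1))"
    unfolding cconv M.N_def by simp
  have M0: "M.N - n * pn = n * (q - pn)" by (simp add: M.N_def diff_mult_distrib2)
  have e1: "M.c (M.N - n * pn) = a 1 (nat ((- p * ps) mod int q))"
  proof -
    have ix: "M.ix (n * (q - pn)) = 1" by (simp add: M.ix_def)
    have "int (M.kk (n * (q - pn))) = ((int q - p mod int q) * (ps mod int q)) mod int q"
      using h(3) pn_lt pn_int psn_int by (simp add: M.kk_def of_nat_mod of_nat_diff)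
    also have "\<dots> = (- p * ps) mod int q" by (rule l1)
    finally have "M.kk (n * (q - pn)) = nat ((- p * ps) mod int q)" by simp
    then show ?thesis using ix M0 by (simp add: M.c_def)
  qed
  have e2: "M.c (M.N - n * pn - 1) = a n (nat ((- (p + 1) * ps) mod int q))"
  proof -
    have dec: "n * (q - pn) - 1 = (n - 1) + n * (q - pn - 1)"
    proof -
      obtain r where r: "q - pn = Suc r" using pn_lt by (cases "q - pn") auto
      have "n * (q - pn) = n * r + n" unfolding r by simp
      then show ?thesis using h(3) r by simp
    qed
    have "M.ix (n * (q - pn) - 1) = (n - 1 + n * (q - pn - 1)) mod n + 1" unfolding M.ix_def dec ..
    also have "\<dots> = (n - 1) mod n + 1" by (simp only: mod_mult_self2)
    also have "\<dots> = n" using h(3) by simp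
    finally have ix: "M.ix (n * (q - pn) - 1) = n" .
    have "(n - 1 + n * (q - pn - 1)) div n = (q - pn - 1) + (n - 1) div n"
      by (rule div_mult_self2) (use h(3) in simp)
    moreover have "(n - 1) div n = 0" using h(3) by (simp add: div_less)
    ultimately have "(n - 1 + n * (q - pn - 1)) div n = q - pn - 1" by simp
    then have "M.kk (n * (q - pn) - 1) = ((q - pn - 1) * psn) mod q" unfolding M.kk_def dec by simp
    then have "int (M.kk (n * (q - pn) - 1)) = (int (q - pn - 1) * int psn) mod int q"
      by (simp add: of_nat_mod del: of_nat_diff)
    also have "int (q - pn - 1) = int q - int pn - 1" using pn_lt by linarith
    also have "(int q - int pn - 1) * int psn mod int q = ((int q - p mod int q - 1) * (ps mod int q)) mod int q"
      using pn_int psn_int by simp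
    also have "\<dots> = (- (p + 1) * ps) mod int q" by (rule l2)
    finally have "M.kk (n * (q - pn) - 1) = nat ((- (p + 1) * ps) mod int q)" by simp
    then show ?thesis using ix M0 by (simp add: M.c_def)
  qed
  show ?thesis
    unfolding LHS1 LHS2 mono_eq e1[symmetric] e2[symmetric]
  proof
    assume A: "(\<forall>i\<in>{1..n}. \<forall>x\<in>orb d (M.T i). M.T i \<le> x) \<and> rot_shift d (\<Union>i\<in>{1..n}. orb d (M.T i)) (int n * p)"
    have inc: "\<And>m. m + 1 < M.N \<Longrightarrow> M.Pt m < M.Pt (m + 1)"
      using M.inc_of_a[OF conjunct1[OF A] conjunct2[OF A] P0 Tinc] by blast
    show "(\<forall>m. m + 1 < M.N \<longrightarrow> M.c m \<le> M.c (m + 1)) \<and> M.c (M.N - n * pn - 1) < M.c (M.N - n * pn)"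
      using M.b_of_inc[OF inc] by blast
  next
    assume B: "(\<forall>m. m + 1 < M.N \<longrightarrow> M.c m \<le> M.c (m + 1)) \<and> M.c (M.N - n * pn - 1) < M.c (M.N - n * pn)"
    have inc: "\<And>m. m + 1 < M.N \<Longrightarrow> M.Pt m < M.Pt (m + 1)"
      using M.inc_of_b B by blast
    show "(\<forall>i\<in>{1..n}. \<forall>x\<in>orb d (M.T i). M.T i \<le> x) \<and> rot_shift d (\<Union>i\<in>{1..n}. orb d (M.T i)) (int n * p)"
      by (rule M.a_of_inc[OF inc P0])
  qed
qed

end
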